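(* Let $d\ge2$, $f:\mathbb Z^d\to\mathbb R$, and let $\varphi:G\to\mathbb R$ be a bounded $f$-flow on the Cayley graph $G$ of $\mathbb Z^d$. Let $$C=\{n_1,\dots,n_1+k_1\}\times\dots\times\{n_{d-1},\dots,n_{d-1}+k_{d-1}\}\times\{n_d,n_d+1\}$$ for some integers $n_1,\dots,n_d,k_1,\dots,k_{d-1}$ with $k_1,\dots,k_{d-1}\ge0$. Then for every $1\le\ell<d$ there is an $f$-flow $\psi$ such that: (i) $\mathrm{supp}(\varphi-\psi)\subseteq\mathrm{edges}(C)$; (ii) for every $x=(x_1,\dots,x_{d-1},n_d)\in C$ with $n_\ell\le x_\ell<n_\ell+k_\ell$ we have $\psi(x,x+e_d)\in\mathbb Z$; (iii) $|\varphi-\psi|<2$ on every edge.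
   Context: $G=\{(x,x')\in\mathbb Z^d\times\mathbb Z^d: x'-x\in\{\pm e_1,\dots,\pm e_d\}\}$ is the Cayley graph of $\mathbb Z^d$; an edge $(x,x')$ is positively oriented if $x'-x=e_j$ for some $j$. For $A\subseteq\mathbb Z^d$, $\mathrm{edges}(A)=\{(x,x+e_j):1\le j\le d,\ \{x,x+e_j\}\subseteq A\}$. An $f$-flow is $\varphi:G\to\mathbb R$ with $\varphi(x,y)=-\varphi(y,x)$ and $f(x)=\sum_{(x,y)\in G}\varphi(x,y)$ for all $x$. For a flow difference $\eta=\varphi-\psi$ (antisymmetric), "$\mathrm{supp}(\eta)\subseteq \mathcal E$" for a set $\mathcal E$ of positively oriented edges means $\eta(x,y)=0$ unless $(x,y)\in\mathcal E$ or $(y,x)\in\mathcal E$. *)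

theory Defs
  imports Complex_Main
begin

text \<open>Points of Z^d are represented as functions nat => int vanishing at all
coordinates >= d; coordinate i (0-indexed) corresponds to the paper's
coordinate i+1.\<close>

type_synonym pt = "nat \<Rightarrow> int"

definition lattice :: "nat \<Rightarrow> pt set" where
  "lattice d = {x. \<forall>i\<ge>d. x i = 0}"

definition unitv :: "nat \<Rightarrow> pt" where
  "unitv j = (\<lambda>i. if i = j then 1 else 0)"

definition padd :: "pt \<Rightarrow> pt \<Rightarrow> pt" (infixl "\<oplus>" 65) where
  "x \<oplus> y = (\<lambda>i. x i + y i)"

definition psub :: "pt \<Rightarrow> pt \<Rightarrow> pt" (infixl "\<ominus>" 65) where
  "x \<ominus> y = (\<lambda>i. x i - y i)"

definition cayley_edge :: "nat \<Rightarrow> pt \<Rightarrow> pt \<Rightarrow> bool" where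
  "cayley_edge d x y \<longleftrightarrow> x \<in> lattice d \<and>
     (\<exists>j<d. y = x \<oplus> unitv j \<or> y = x \<ominus> unitv j)"

definition is_flow :: "nat \<Rightarrow> (pt \<Rightarrow> real) \<Rightarrow> (pt \<Rightarrow> pt \<Rightarrow> real) \<Rightarrow> bool" where
  "is_flow d f \<phi> \<longleftrightarrow>
     (\<forall>x y. cayley_edge d x y \<longrightarrow> \<phi> x y = - \<phi> y x) \<and>
     (\<forall>x\<in>lattice d. f x = (\<Sum>j<d. \<phi> x (x \<oplus> unitv j) + \<phi> x (x \<ominus> unitv j)))"

definition bounded_flow :: "nat \<Rightarrow> (pt \<Rightarrow> pt \<Rightarrow> real) \<Rightarrow> bool" where
  "bounded_flow d \<phi> \<longleftrightarrow> (\<exists>B. \<forall>x y. cayley_edge d x y \<longrightarrow> \<bar>\<phi> x y\<bar> \<le> B)"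

definition edges :: "nat \<Rightarrow> pt set \<Rightarrow> (pt \<times> pt) set" where
  "edges d A = {(x, x \<oplus> unitv j) | x j. j < d \<and> x \<in> A \<and> x \<oplus> unitv j \<in> A}"

definition supp_sub :: "nat \<Rightarrow> (pt \<Rightarrow> pt \<Rightarrow> real) \<Rightarrow> (pt \<times> pt) set \<Rightarrow> bool" where
  "supp_sub d \<eta> E \<longleftrightarrow>
     (\<forall>x y. cayley_edge d x y \<longrightarrow> \<eta> x y \<noteq> 0 \<longrightarrow> (x, y) \<in> E \<or> (y, x) \<in> E)"

definition box :: "nat \<Rightarrow> pt \<Rightarrow> pt \<Rightarrow> pt set" where
  "box d n k = {x \<in> lattice d. (\<forall>i<d-1. n i \<le> x i \<and> x i \<le> n i + k i) \<and>
                 (x (d-1) = n (d-1) \<or> x (d-1) = n (d-1) + 1)}"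

end

theory Submission
  imports Defs
begin

lemma padd_inj[simp]: "(a \<oplus> unitv i = a \<oplus> unitv j) \<longleftrightarrow> i = j"
proof
  assume "a \<oplus> unitv i = a \<oplus> unitv j"
  hence "(a \<oplus> unitv i) i = (a \<oplus> unitv j) i" by simp
  thus "i = j" by (auto simp: padd_def unitv_def split: if_splits)
qed simp

lemma psub_ne_padd[simp]: "a \<ominus> unitv i \<noteq> a \<oplus> unitv j"
proof
  assume "a \<ominus> unitv i = a \<oplus> unitv j"
  hence "(a \<ominus> unitv i) i = (a \<oplus> unitv j) i" by simp
  thus False by (auto simp: padd_def psub_def unitv_def split: if_splits)
qed

lemma padd2_ne[simp]: "a \<oplus> unitv i \<oplus> unitv j \<noteq> a"
proof
  assume "a \<oplus> unitv i \<oplus> unitv j = a"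
  hence "(a \<oplus> unitv i \<oplus> unitv j) i = a i" by simp
  thus False by (auto simp: padd_def unitv_def split: if_splits)
qed

lemma psub_padd_eq[simp]: "(a \<ominus> unitv j \<oplus> unitv i = a) \<longleftrightarrow> i = j"
proof
  assume "a \<ominus> unitv j \<oplus> unitv i = a"
  hence "(a \<ominus> unitv j \<oplus> unitv i) i = a i" by simp
  thus "i = j" by (auto simp: padd_def psub_def unitv_def split: if_splits)
qed (auto simp: padd_def psub_def fun_eq_iff)

lemma psub_padd_eq'[simp]: "(a = a \<ominus> unitv j \<oplus> unitv i) \<longleftrightarrow> i = j"
  using psub_padd_eq by metis

lemma padd2_ne'[simp]: "a \<noteq> a \<oplus> unitv i \<oplus> unitv j"
  using padd2_ne by metis

lemma padd_psub_cancel[simp]: "a \<oplus> unitv i \<ominus> unitv i = a"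
  by (auto simp: padd_def psub_def fun_eq_iff)

lemma psub_comm: "a \<ominus> unitv i \<ominus> unitv j = a \<ominus> unitv j \<ominus> unitv i"
  by (auto simp: psub_def fun_eq_iff)

lemma padd_comm: "a \<oplus> unitv i \<oplus> unitv j = a \<oplus> unitv j \<oplus> unitv i"
  by (auto simp: padd_def fun_eq_iff)

definition om :: "nat \<Rightarrow> nat \<Rightarrow> (pt \<Rightarrow> real) \<Rightarrow> pt \<Rightarrow> pt \<Rightarrow> real" where
  "om L l c a b = (if b = a \<oplus> unitv L then c a - c (a \<ominus> unitv l)
      else if b = a \<oplus> unitv l then c (a \<ominus> unitv L) - c a else 0)"

definition eta :: "nat \<Rightarrow> nat \<Rightarrow> (pt \<Rightarrow> real) \<Rightarrow> pt \<Rightarrow> pt \<Rightarrow> real" where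
  "eta L l c a b = om L l c a b - om L l c b a"

lemma eta_plus: "l \<noteq> L \<Longrightarrow> eta L l c a (a \<oplus> unitv j) =
   (if j = L then c a - c (a \<ominus> unitv l) else 0) + (if j = l then c (a \<ominus> unitv L) - c a else 0)"
  by (auto simp: eta_def om_def)

lemma eta_minus: "l \<noteq> L \<Longrightarrow> eta L l c a (a \<ominus> unitv j) =
   (if j = L then -(c (a \<ominus> unitv L) - c (a \<ominus> unitv L \<ominus> unitv l)) else 0) +
   (if j = l then -(c (a \<ominus> unitv l \<ominus> unitv L) - c (a \<ominus> unitv l)) else 0)"
  by (auto simp: eta_def om_def)

lemma eta_div: assumes "l \<noteq> L" "l < d" "L < d"
  shows "(\<Sum>j<d. eta L l c a (a \<oplus> unitv j) + eta L l c a (a \<ominus> unitv j)) = 0"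
proof -
  have "(\<Sum>j<d. eta L l c a (a \<oplus> unitv j) + eta L l c a (a \<ominus> unitv j)) =
    (\<Sum>j<d. (if j = L then c a - c (a \<ominus> unitv l) else 0) + (if j = l then c (a \<ominus> unitv L) - c a else 0)
     + ((if j = L then -(c (a \<ominus> unitv L) - c (a \<ominus> unitv L \<ominus> unitv l)) else 0) +
   (if j = l then -(c (a \<ominus> unitv l \<ominus> unitv L) - c (a \<ominus> unitv l)) else 0)))"
    using assms(1) by (simp add: eta_plus eta_minus)
  also have "\<dots> = 0" using assms by (simp add: sum.distrib psub_comm[of a L l])
  finally show ?thesis .
qed

lemma eta_bound: assumes "\<And>x. -1 < c x \<and> c x \<le> 0"
  shows "\<bar>eta L l c a b\<bar> < 2"
proof -
  have "\<bar>om L l c x y\<bar> < 1" for x y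
    using assms[of x] assms[of "x \<ominus> unitv l"] assms[of "x \<ominus> unitv L"]
    by (auto simp: om_def)
  from this[of a b] this[of b a] show ?thesis by (simp add: eta_def)
qed


lemma om_edges:
  assumes "om L l c x y \<noteq> 0" "L < d" "l < d"
    and R: "\<And>a. c a \<noteq> 0 \<Longrightarrow> a \<in> B \<and> a \<oplus> unitv L \<in> B \<and> a \<oplus> unitv l \<in> B \<and> a \<oplus> unitv l \<oplus> unitv L \<in> B"
  shows "(x, y) \<in> edges d B"
proof -
  have E: "\<And>a j. j < d \<Longrightarrow> a \<in> B \<Longrightarrow> a \<oplus> unitv j \<in> B \<Longrightarrow> (a, a \<oplus> unitv j) \<in> edges d B"
    unfolding edges_def by blast
  show ?thesis
  proof (cases "y = x \<oplus> unitv L")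
    case True
    with assms(1) have "c x \<noteq> 0 \<or> c (x \<ominus> unitv l) \<noteq> 0" by (auto simp: om_def)
    thus ?thesis
    proof
      assume "c x \<noteq> 0" thus ?thesis using R[of x] E[of L x] True assms by auto
    next
      assume "c (x \<ominus> unitv l) \<noteq> 0"
      from R[OF this] have "x \<in> B" "x \<oplus> unitv L \<in> B"
        using psub_padd_eq[of x l l] by (metis)+
      thus ?thesis using E[of L x] True assms by auto
    qed
  next
    case False
    with assms(1) have Y: "y = x \<oplus> unitv l" and "c (x \<ominus> unitv L) \<noteq> 0 \<or> c x \<noteq> 0"
      by (auto simp: om_def split: if_splits)
    from this(2) show ?thesis
    proof
      assume "c x \<noteq> 0" thus ?thesis using R[of x] E[of l x] Y assms by auto
    next
      assume "c (x \<ominus> unitv L) \<noteq> 0"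
      from R[OF this] have "x \<in> B" "x \<oplus> unitv l \<in> B"
        using psub_padd_eq[of x L L] padd_comm[of "x \<ominus> unitv L" l L] by (metis)+
      thus ?thesis using E[of l x] Y assms by auto
    qed
  qed
qed

theorem mainTheorem5:
  fixes d :: nat and f :: "pt \<Rightarrow> real" and \<phi> :: "pt \<Rightarrow> pt \<Rightarrow> real"
    and n k :: pt and l :: nat
  assumes "d \<ge> 2"
    and "is_flow d f \<phi>" and "bounded_flow d \<phi>"
    and "\<forall>i<d-1. k i \<ge> 0"
    and "l < d - 1"
  shows "\<exists>\<psi>. is_flow d f \<psi> \<and>
           supp_sub d (\<lambda>x y. \<phi> x y - \<psi> x y) (edges d (box d n k)) \<and>
           (\<forall>x\<in>box d n k. x (d-1) = n (d-1) \<and> n l \<le> x l \<and> x l < n l + k l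
              \<longrightarrow> \<psi> x (x \<oplus> unitv (d-1)) \<in> \<int>) \<and>
           (\<forall>x y. cayley_edge d x y \<longrightarrow> \<bar>\<phi> x y - \<psi> x y\<bar> < 2)"
proof -
  define L where "L = d - 1"
  have lL: "l \<noteq> L" "l < d" "L < d" using assms(1,5) by (auto simp: L_def)
  define R where "R a \<longleftrightarrow> a \<in> lattice d \<and> a L = n L \<and>
     (\<forall>i<d-1. i \<noteq> l \<longrightarrow> n i \<le> a i \<and> a i \<le> n i + k i) \<and> n l \<le> a l \<and> a l < n l + k l" for a
  define S where "S a = (\<Sum>s\<in>{n l..a l}. \<phi> (a(l:=s)) (a(l:=s) \<oplus> unitv L))" for a
  define c where "c a = (if R a then - frac (S a) else 0)" for a
  define \<psi> where "\<psi> a b = \<phi> a b + eta L l c a b" for a b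
  have cb: "-1 < c x \<and> c x \<le> 0" for x
    using frac_lt_1[of "S x"] frac_ge_0[of "S x"] by (auto simp: c_def)
  have latt: "a \<oplus> unitv j \<in> lattice d" if "a \<in> lattice d" "j < d" for a j
    using that by (auto simp: lattice_def padd_def unitv_def)
  have Rbox: "a \<in> box d n k \<and> a \<oplus> unitv L \<in> box d n k \<and> a \<oplus> unitv l \<in> box d n k \<and>
      a \<oplus> unitv l \<oplus> unitv L \<in> box d n k" if "R a" for a
  proof -
    have a1: "a \<oplus> unitv l \<in> lattice d" "a \<oplus> unitv L \<in> lattice d" "a \<oplus> unitv l \<oplus> unitv L \<in> lattice d"
      using that lL latt by (auto simp: R_def)
    have co: "n i \<le> a i \<and> a i \<le> n i + k i" "n i \<le> a i + 1 \<and> a i + 1 \<le> n i + k i" if "i < d - 1" "i = l" for i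
      using `R a` that by (auto simp: R_def)
    show ?thesis using that a1 lL co unfolding box_def R_def
      by (auto simp: padd_def unitv_def L_def)
  qed
  have cR: "c a \<noteq> 0 \<Longrightarrow> R a" for a by (auto simp: c_def split: if_splits)
  have flow: "is_flow d f \<psi>"
  proof -
    have "(\<Sum>j<d. \<psi> x (x \<oplus> unitv j) + \<psi> x (x \<ominus> unitv j)) =
          (\<Sum>j<d. \<phi> x (x \<oplus> unitv j) + \<phi> x (x \<ominus> unitv j)) +
          (\<Sum>j<d. eta L l c x (x \<oplus> unitv j) + eta L l c x (x \<ominus> unitv j))" for x
      by (simp add: \<psi>_def sum.distrib[symmetric] algebra_simps)
    thus ?thesis using assms(2) eta_div[OF lL] unfolding is_flow_def \<psi>_def eta_def by auto
  qed
  have supp: "supp_sub d (\<lambda>x y. \<phi> x y - \<psi> x y) (edges d (box d n k))"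
    unfolding supp_sub_def
  proof (intro allI impI)
    fix x y assume "cayley_edge d x y" "\<phi> x y - \<psi> x y \<noteq> 0"
    hence "om L l c x y \<noteq> 0 \<or> om L l c y x \<noteq> 0" by (auto simp: \<psi>_def eta_def)
    thus "(x, y) \<in> edges d (box d n k) \<or> (y, x) \<in> edges d (box d n k)"
      using om_edges[OF _ lL(3,2), of c, OF _ Rbox[OF cR]] by blast
  qed
  have bnd: "\<forall>x y. cayley_edge d x y \<longrightarrow> \<bar>\<phi> x y - \<psi> x y\<bar> < 2"
    using eta_bound[of c, OF cb] by (simp add: \<psi>_def)
  have integ: "\<psi> x (x \<oplus> unitv L) \<in> \<int>"
    if x: "x \<in> box d n k" "x L = n L" "n l \<le> x l" "x l < n l + k l" for x
  proof -
    have Rx: "R x" using x lL unfolding R_def box_def L_def by auto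
    have ps: "\<psi> x (x \<oplus> unitv L) = \<phi> x (x \<oplus> unitv L) + c x - c (x \<ominus> unitv l)"
      using lL by (simp add: \<psi>_def eta_plus)
    show ?thesis
    proof (cases "x l = n l")
      case True
      have "\<not> R (x \<ominus> unitv l)" using True by (auto simp: R_def psub_def unitv_def)
      moreover have "S x = \<phi> x (x \<oplus> unitv L)" using True by (simp add: S_def flip: True)
      ultimately have "\<psi> x (x \<oplus> unitv L) = of_int \<lfloor>S x\<rfloor>"
        using ps Rx by (simp add: c_def frac_def)
      thus ?thesis by simp
    next
      case False
      let ?y = "x \<ominus> unitv l"
      have yl: "?y l = x l - 1" by (simp add: psub_def unitv_def)
      have yu: "?y(l:=s) = x(l:=s)" for s by (auto simp: psub_def unitv_def fun_eq_iff)
      have Ry: "R ?y" using Rx False lL unfolding R_def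
        by (auto simp: psub_def unitv_def lattice_def)
      have "{n l..x l} = insert (x l) {n l..x l - 1}" using False x(3) by auto
      hence "S x = S ?y + \<phi> x (x \<oplus> unitv L)"
        unfolding S_def yl yu by simp
      hence "\<psi> x (x \<oplus> unitv L) = of_int (\<lfloor>S x\<rfloor> - \<lfloor>S ?y\<rfloor>)"
        using ps Rx Ry by (simp add: c_def frac_def)
      thus ?thesis by (metis Ints_of_int)
    qed
  qed
  show ?thesis
    apply (rule exI[of _ \<psi>])
    using flow supp bnd integ by (auto simp: L_def)
qed

end
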